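(* Let $(\mathcal{Y},d_{\mathcal{Y}})$ be a complete metric space admitting a conical geodesic bicombing and admitting a quantization $(Q_q:\mathbb{R}^{D_q}\to\mathcal{Y})_{q\in\mathbb{N}_+}$. Let $\beta:(\mathcal{P}_1(\mathcal{Y}),W_1)\to\mathcal{Y}$ be a 1-Lipschitz barycenter map (i.e. $\beta(\delta_y)=y$ for all $y$). Then $(\mathcal{Y},d_{\mathcal{Y}})$ is a QAS space with mixing function $\eta(w,(y_i)_{i=1}^N)=\beta\big(\sum_{i=1}^Nw_i\delta_{y_i}\big)$ and quantized mixing function $$\hat\eta(w,(z_i)_{i=1}^N)=\beta\Big(\sum_{i=1}^Nw_i\,\delta_{Q_q(z_i)}\Big),\qquad w\in\Delta_N,\ z_i\in\mathbb{R}^{D_q}.$$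
   Context: A geodesic bicombing is a map $\sigma:\mathcal{Y}\times\mathcal{Y}\times[0,1]\to\mathcal{Y}$ with $\sigma(x,\tilde x,0)=x$, $\sigma(x,\tilde x,1)=\tilde x$ and $d(\sigma(x,\tilde x,t),\sigma(x,\tilde x,s))=|t-s|d(x,\tilde x)$; it is conical if $d(\sigma(x,\tilde x,t),\sigma(x',\tilde x',t))\le(1-t)d(x,x')+td(\tilde x,\tilde x')$. (A complete metric space admits a conical geodesic bicombing iff it admits a 1-Lipschitz barycenter map $\beta:\mathcal{P}_1(\mathcal{Y})\to\mathcal{Y}$.) $\mathcal{Y}$ is approximately simplicial with mixing function $\eta:\bigcup_N\Delta_N\times\mathcal{Y}^N\to\mathcal{Y}$ if for some $C_\eta\ge1$, $p\in\mathbb{N}_+$: $d(\eta(w,\mathbf y),y_i)\le C_\eta(\sum_jd(y_i,y_j)^pw_j)^{1/p}$ for all $N,w\in\Delta_N,\mathbf y\in\mathcal{Y}^N,i$. A quantization is a family $Q_q:\mathbb{R}^{D_q}\to\mathcal{Y}$ such that for every $z\in\mathbb{R}^{D_q}$ there is $\tilde z\in\mathbb{R}^{D_{q+1}}$ with $Q_q(z)=Q_{q+1}(\tilde z)$, every $y$ is approximated arbitrarily well by some $Q_q(z)$, and for each compact $K\subseteq\mathcal{Y}$ and $\epsilon>0$, $\inf\{D_q:\forall y\in K\ \exists z\in\mathbb{R}^{D_q},\,d(y,Q_q(z))<\epsilon\}$ is finite. A QAS space is a quantizable approximately simplicial space equipped with $\hat\eta(w,Z)=\eta(w,(Q_q(Z_1),\dots,Q_q(Z_N)))$.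 *)

theory Defs
  imports "HOL-Probability.Probability"
begin

definition geodesic_bicombing :: "('a::metric_space \<Rightarrow> 'a \<Rightarrow> real \<Rightarrow> 'a) \<Rightarrow> bool" where
  "geodesic_bicombing \<sigma> \<longleftrightarrow>
     (\<forall>x x'. \<sigma> x x' 0 = x \<and> \<sigma> x x' 1 = x') \<and>
     (\<forall>x x' t s. t \<in> {0..1} \<and> s \<in> {0..1} \<longrightarrow>
        dist (\<sigma> x x' t) (\<sigma> x x' s) = \<bar>t - s\<bar> * dist x x')"

definition conical_geodesic_bicombing :: "('a::metric_space \<Rightarrow> 'a \<Rightarrow> real \<Rightarrow> 'a) \<Rightarrow> bool" where
  "conical_geodesic_bicombing \<sigma> \<longleftrightarrow> geodesic_bicombing \<sigma> \<and>
     (\<forall>x x' y y' t. t \<in> {0..1} \<longrightarrow>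
        dist (\<sigma> x x' t) (\<sigma> y y' t) \<le> (1 - t) * dist x y + t * dist x' y')"

definition P1 :: "('a::metric_space) measure set" where
  "P1 = {\<mu>. prob_space \<mu> \<and> sets \<mu> = sets borel \<and>
            (\<exists>y0. (\<integral>\<^sup>+ x. ennreal (dist x y0) \<partial>\<mu>) < \<infinity>)}"

definition couplings :: "('a::metric_space) measure \<Rightarrow> 'a measure \<Rightarrow> ('a \<times> 'a) measure set" where
  "couplings \<mu> \<nu> = {\<pi>. prob_space \<pi> \<and> sets \<pi> = sets (borel \<Otimes>\<^sub>M borel) \<and>
        distr \<pi> borel fst = \<mu> \<and> distr \<pi> borel snd = \<nu>}"

definition W1 :: "('a::metric_space) measure \<Rightarrow> 'a measure \<Rightarrow> ennreal" where
  "W1 \<mu> \<nu> = (INF \<pi> \<in> couplings \<mu> \<nu>. \<integral>\<^sup>+ p. ennreal (dist (fst p) (snd p)) \<partial>\<pi>)"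

definition barycenter_map :: "('a::metric_space measure \<Rightarrow> 'a) \<Rightarrow> bool" where
  "barycenter_map \<beta> \<longleftrightarrow>
     (\<forall>y. \<beta> (return borel y) = y) \<and>
     (\<forall>\<mu>\<in>P1. \<forall>\<nu>\<in>P1. ennreal (dist (\<beta> \<mu>) (\<beta> \<nu>)) \<le> W1 \<mu> \<nu>)"

definition dirac_mix :: "nat \<Rightarrow> (nat \<Rightarrow> real) \<Rightarrow> (nat \<Rightarrow> 'a::metric_space) \<Rightarrow> 'a measure" where
  "dirac_mix N w y = measure_of (space borel) (sets borel)
      (\<lambda>A. \<Sum>i<N. ennreal (w i) * indicator A (y i))"

definition std_simplex :: "nat \<Rightarrow> (nat \<Rightarrow> real) set" where
  "std_simplex N = {w. (\<forall>j<N. 0 \<le> w j) \<and> (\<Sum>j<N. w j) = 1}"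

text \<open>eta N w y is the mixing function applied to w in Delta_N and y in Y^N
  (only the values y 0, ..., y (N-1) are relevant).\<close>
definition approx_simplicial ::
  "(nat \<Rightarrow> (nat \<Rightarrow> real) \<Rightarrow> (nat \<Rightarrow> 'a::metric_space) \<Rightarrow> 'a) \<Rightarrow> bool" where
  "approx_simplicial \<eta> \<longleftrightarrow>
     (\<exists>C::real. \<exists>p::nat. C \<ge> 1 \<and> p \<ge> 1 \<and>
       (\<forall>N w y i. N \<ge> 1 \<and> w \<in> std_simplex N \<and> i < N \<longrightarrow>
          dist (\<eta> N w y) (y i) \<le> C * (\<Sum>j<N. dist (y i) (y j) ^ p * w j) powr (1 / real p)))"

text \<open>A quantization (Q_q : R^{D_q} -> Y)_{q >= 1}; points of R^{D_q} are real lists of length D q.\<close>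
definition quantization :: "(nat \<Rightarrow> real list \<Rightarrow> 'a::metric_space) \<Rightarrow> (nat \<Rightarrow> nat) \<Rightarrow> bool" where
  "quantization Q D \<longleftrightarrow>
     (\<forall>q\<ge>1. \<forall>z. length z = D q \<longrightarrow>
        (\<exists>z'. length z' = D (Suc q) \<and> Q q z = Q (Suc q) z')) \<and>
     (\<forall>y. \<forall>\<epsilon>>0. \<exists>q\<ge>1. \<exists>z. length z = D q \<and> dist y (Q q z) < \<epsilon>) \<and>
     (\<forall>K. compact K \<longrightarrow> (\<forall>\<epsilon>>0. \<exists>q\<ge>1. \<forall>y\<in>K. \<exists>z. length z = D q \<and> dist y (Q q z) < \<epsilon>))"

definition quantized_mixing ::
  "(nat \<Rightarrow> (nat \<Rightarrow> real) \<Rightarrow> (nat \<Rightarrow> 'a) \<Rightarrow> 'a) \<Rightarrow> (nat \<Rightarrow> real list \<Rightarrow> 'a)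
     \<Rightarrow> nat \<Rightarrow> nat \<Rightarrow> (nat \<Rightarrow> real) \<Rightarrow> (nat \<Rightarrow> real list) \<Rightarrow> 'a" where
  "quantized_mixing \<eta> Q q N w Z = \<eta> N w (\<lambda>i. Q q (Z i))"

definition QAS ::
  "(nat \<Rightarrow> real list \<Rightarrow> 'a::metric_space) \<Rightarrow> (nat \<Rightarrow> nat)
     \<Rightarrow> (nat \<Rightarrow> (nat \<Rightarrow> real) \<Rightarrow> (nat \<Rightarrow> 'a) \<Rightarrow> 'a) \<Rightarrow> bool" where
  "QAS Q D \<eta> \<longleftrightarrow> quantization Q D \<and> approx_simplicial \<eta>"

end

theory Submission
  imports Defs
begin
lemma dm_eq:
  "dirac_mix N w (y::nat \<Rightarrow> 'a::metric_space) = distr (density (count_space {..<N}) (\<lambda>i. ennreal (w i))) borel y"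
  (is "_ = ?R")
proof -
  have sp: "space ?R = space borel" and st: "sets ?R = sets borel" by auto
  have "?R = measure_of (space borel) (sets borel) (emeasure ?R)"
    using measure_of_of_measure[of ?R] sp st by simp
  also have "\<dots> = dirac_mix N w y"
    unfolding dirac_mix_def
  proof (rule measure_of_eq)
    show "sets borel \<subseteq> Pow (space borel)" by auto
    fix a :: "'a set" assume "a \<in> sigma_sets (space borel) (sets borel)"
    then have a: "a \<in> sets borel" by (metis sets.sigma_sets_eq space_borel)
    have "emeasure ?R a = emeasure (density (count_space {..<N}) (\<lambda>i. ennreal (w i))) (y -` a \<inter> {..<N})"
      using a by (subst emeasure_distr) auto
    also have "\<dots> = (\<integral>\<^sup>+ i. ennreal (w i) * indicator (y -` a \<inter> {..<N}) i \<partial>count_space {..<N})"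
      by (subst emeasure_density) auto
    also have "\<dots> = (\<Sum>i<N. ennreal (w i) * indicator a (y i))"
      by (subst nn_integral_count_space_finite) (auto intro!: sum.cong simp: indicator_def)
    finally show "emeasure ?R a = (\<Sum>i<N. ennreal (w i) * indicator a (y i))" .
  qed
  finally show ?thesis ..
qed

lemma dm_int:
  assumes g: "g \<in> borel_measurable borel"
  shows "(\<integral>\<^sup>+ x. g x \<partial>dirac_mix N w (y::nat \<Rightarrow> 'a::metric_space)) = (\<Sum>i<N. ennreal (w i) * g (y i))"
  unfolding dm_eq using g
  by (simp add: nn_integral_distr nn_integral_density nn_integral_count_space_finite)

lemma dm_sets: "sets (dirac_mix N w (y::nat \<Rightarrow> 'a::metric_space)) = sets borel"
  unfolding dm_eq by simp

lemma dm_prob: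
  assumes "w \<in> std_simplex N"
  shows "prob_space (dirac_mix N w (y::nat \<Rightarrow> 'a::metric_space))"
proof
  have "emeasure (dirac_mix N w y) (space (dirac_mix N w y)) = (\<integral>\<^sup>+ x. 1 \<partial>dirac_mix N w y)"
    by simp
  also have "\<dots> = (\<Sum>i<N. ennreal (w i))" by (subst dm_int) auto
  also have "\<dots> = ennreal (\<Sum>i<N. w i)" using assms by (subst sum_ennreal) (auto simp: std_simplex_def)
  also have "\<dots> = 1" using assms by (simp add: std_simplex_def)
  finally show "emeasure (dirac_mix N w y) (space (dirac_mix N w y)) = 1" .
qed


lemma dist_meas0[measurable]: "(\<lambda>x. dist x (c::'a::metric_space)) \<in> borel_measurable borel"
  by (intro borel_measurable_continuous_onI continuous_intros)

lemma dist_meas: "(\<lambda>x. ennreal (dist x (c::'a::metric_space))) \<in> borel_measurable borel"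
  by measurable

lemma sum_ind_single:
  assumes "finite S" "p \<in> S"
  shows "(\<Sum>s\<in>S. indicator {s} p * (h s::ennreal)) = h p"
proof -
  have "(\<Sum>s\<in>S. indicator {s} p * h s) = (\<Sum>s\<in>S. if s = p then h s else 0)"
    by (rule sum.cong) (auto simp: indicator_def)
  also have "\<dots> = h p" using assms by (simp add: sum.delta')
  finally show ?thesis .
qed

lemma singleton_pair_sets: "{s::'a::metric_space \<times> 'a} \<in> sets (borel \<Otimes>\<^sub>M (borel :: ('a::metric_space) measure))"
proof -
  have "{s} = {fst s} \<times> {snd s}" by (cases s) auto
  moreover have "{fst s} \<times> {snd s} \<in> sets (borel \<Otimes>\<^sub>M (borel :: 'a measure))"
    using pair_measureI[OF borel_closed[OF closed_singleton] borel_closed[OF closed_singleton]] .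
  ultimately show ?thesis by simp
qed

lemma dm_P1:
  assumes "w \<in> std_simplex N"
  shows "dirac_mix N w (y::nat \<Rightarrow> 'a::metric_space) \<in> P1"
  unfolding P1_def
proof (intro CollectI conjI exI)
  show "prob_space (dirac_mix N w y)" using assms by (rule dm_prob)
  show "sets (dirac_mix N w y) = sets borel" by (rule dm_sets)
  have "(\<integral>\<^sup>+ x. ennreal (dist x (y 0)) \<partial>dirac_mix N w y) = (\<Sum>i<N. ennreal (w i) * ennreal (dist (y i) (y 0)))"
    by (rule dm_int) (rule dist_meas)
  also have "\<dots> < \<infinity>" by (simp add: ennreal_mult_less_top)
  finally show "(\<integral>\<^sup>+ x. ennreal (dist x (y 0)) \<partial>dirac_mix N w y) < \<infinity>" .
qed

lemma ret_P1: "return borel (c::'a::metric_space) \<in> P1"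
  unfolding P1_def
proof (intro CollectI conjI exI)
  show "prob_space (return borel c)" by (rule prob_space_return) auto
  show "sets (return borel c) = sets borel" by simp
  show "(\<integral>\<^sup>+ x. ennreal (dist x c) \<partial>return borel c) < \<infinity>"
    by (subst nn_integral_return) (auto intro: dist_meas dist_meas0)
qed

lemma W1_bound:
  assumes "w \<in> std_simplex N"
  shows "W1 (dirac_mix N w (y::nat \<Rightarrow> 'a::metric_space)) (return borel c)
     \<le> (\<Sum>i<N. ennreal (w i) * ennreal (dist (y i) c))"
proof -
  let ?\<mu> = "dirac_mix N w y"
  let ?\<pi> = "distr ?\<mu> (borel \<Otimes>\<^sub>M borel) (\<lambda>x. (x, c))"
  interpret P: prob_space ?\<mu> using assms by (rule dm_prob)
  have meas: "(\<lambda>x. (x, c)) \<in> measurable ?\<mu> (borel \<Otimes>\<^sub>M borel)"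
    by (simp add: measurable_cong_sets[OF dm_sets refl])
  have cpl: "?\<pi> \<in> couplings ?\<mu> (return borel c)"
    unfolding couplings_def
  proof (intro CollectI conjI)
    show "prob_space ?\<pi>" using meas by (rule P.prob_space_distr)
    show "sets ?\<pi> = sets (borel \<Otimes>\<^sub>M borel)" by simp
    have "distr ?\<pi> borel fst = distr ?\<mu> borel (fst \<circ> (\<lambda>x. (x, c)))"
      using meas by (subst distr_distr) auto
    also have "\<dots> = distr ?\<mu> borel (\<lambda>x. x)" by (simp add: comp_def)
    also have "\<dots> = ?\<mu>"
      using distr_cong[of ?\<mu> ?\<mu> borel ?\<mu> "\<lambda>x. x" "\<lambda>x. x"] by (simp add: dm_sets)
    finally show "distr ?\<pi> borel fst = ?\<mu>" .
    have "distr ?\<pi> borel snd = distr ?\<mu> borel (snd \<circ> (\<lambda>x. (x, c)))"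
      using meas by (subst distr_distr) auto
    also have "\<dots> = distr ?\<mu> borel (\<lambda>x. c)" by (simp add: comp_def)
    also have "\<dots> = return borel c"
    proof (rule measure_eqI)
      show "sets (distr ?\<mu> borel (\<lambda>x. c)) = sets (return borel c)" by simp
      fix A assume "A \<in> sets (distr ?\<mu> borel (\<lambda>x. c))"
      then have A: "A \<in> sets borel" by simp
      have "emeasure (distr ?\<mu> borel (\<lambda>x. c)) A = emeasure ?\<mu> ((\<lambda>x. c) -` A \<inter> space ?\<mu>)"
        using A by (subst emeasure_distr) (auto simp: measurable_cong_sets[OF dm_sets refl])
      also have "\<dots> = indicator A c"
        by (cases "c \<in> A") (auto simp: P.emeasure_space_1)
      finally show "emeasure (distr ?\<mu> borel (\<lambda>x. c)) A = emeasure (return borel c) A"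
        using A by simp
    qed
    finally show "distr ?\<pi> borel snd = return borel c" .
  qed
  let ?S = "(\<lambda>k. (y k, c)) ` {..<N}"
  let ?g = "\<lambda>p. (\<Sum>s\<in>?S. indicator {s} p * ennreal (dist (fst s) (snd s))) + \<infinity> * indicator (- ?S) p"
  have finS: "finite ?S" by simp
  have Ssets: "?S \<in> sets (borel \<Otimes>\<^sub>M borel)"
  proof -
    have "?S = (\<Union>k<N. {(y k, c)})" by auto
    also have "\<dots> \<in> sets (borel \<Otimes>\<^sub>M borel)" by (intro sets.finite_UN) (auto intro: singleton_pair_sets)
    finally show ?thesis .
  qed
  have cS: "- ?S \<in> sets (borel \<Otimes>\<^sub>M borel)"
    using sets.compl_sets[OF Ssets] by (simp add: space_pair_measure Compl_eq_Diff_UNIV)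
  have gmeas: "?g \<in> borel_measurable (borel \<Otimes>\<^sub>M borel)"
    using singleton_pair_sets cS by measurable
  from cpl have "W1 ?\<mu> (return borel c) \<le> (\<integral>\<^sup>+ p. ennreal (dist (fst p) (snd p)) \<partial>?\<pi>)"
    unfolding W1_def by (rule INF_lower)
  also have "\<dots> \<le> (\<integral>\<^sup>+ p. ?g p \<partial>?\<pi>)"
  proof (rule nn_integral_mono)
    fix p :: "'a \<times> 'a"
    show "ennreal (dist (fst p) (snd p)) \<le> ?g p"
    proof (cases "p \<in> ?S")
      case True
      then show ?thesis using sum_ind_single[OF finS True, of "\<lambda>s. ennreal (dist (fst s) (snd s))"] by simp
    next
      case False
      then show ?thesis by simp
    qed
  qed
  also have "\<dots> = (\<integral>\<^sup>+ x. ?g (x, c) \<partial>?\<mu>)"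
    using meas gmeas by (subst nn_integral_distr) auto
  also have "\<dots> = (\<Sum>i<N. ennreal (w i) * ?g (y i, c))"
    by (rule dm_int) (rule measurable_compose[OF _ gmeas], simp add: measurable_Pair)
  also have "\<dots> = (\<integral>\<^sup>+ x. ennreal (dist x c) \<partial>?\<mu>)"
  proof -
    have "?g (y i, c) = ennreal (dist (y i) c)" if "i < N" for i
    proof -
      have "(y i, c) \<in> ?S" using that by auto
      then show ?thesis using sum_ind_single[OF finS, of "(y i, c)" "\<lambda>s. ennreal (dist (fst s) (snd s))"] by simp
    qed
    then show ?thesis by (subst dm_int) (auto intro: dist_meas intro!: sum.cong)
  qed
  also have "\<dots> = (\<Sum>i<N. ennreal (w i) * ennreal (dist (y i) c))"
    by (rule dm_int) (rule dist_meas)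
  finally show ?thesis .
qed


theorem mainTheorem6:
  fixes \<sigma> :: "'a::complete_space \<Rightarrow> 'a \<Rightarrow> real \<Rightarrow> 'a"
    and Q :: "nat \<Rightarrow> real list \<Rightarrow> 'a" and D :: "nat \<Rightarrow> nat"
    and \<beta> :: "'a measure \<Rightarrow> 'a"
  assumes "conical_geodesic_bicombing \<sigma>"
    and "quantization Q D"
    and "barycenter_map \<beta>"
  shows "QAS Q D (\<lambda>N w y. \<beta> (dirac_mix N w y)) \<and>
         (\<forall>q N w Z. quantized_mixing (\<lambda>N w y. \<beta> (dirac_mix N w y)) Q q N w Z
                     = \<beta> (dirac_mix N w (\<lambda>i. Q q (Z i))))"
proof (intro conjI allI)
  show "quantized_mixing (\<lambda>N w y. \<beta> (dirac_mix N w y)) Q q N w Z = \<beta> (dirac_mix N w (\<lambda>i. Q q (Z i)))"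
    for q N w Z by (simp add: quantized_mixing_def)
  have b: "\<And>y. \<beta> (return borel y) = y"
    and L: "\<And>\<mu> \<nu>. \<mu> \<in> P1 \<Longrightarrow> \<nu> \<in> P1 \<Longrightarrow> ennreal (dist (\<beta> \<mu>) (\<beta> \<nu>)) \<le> W1 \<mu> \<nu>"
    using assms(3) unfolding barycenter_map_def by auto
  have "approx_simplicial (\<lambda>N w y. \<beta> (dirac_mix N w y))"
    unfolding approx_simplicial_def
  proof (intro exI[of _ "1::real"] exI[of _ "1::nat"] conjI allI impI)
    fix N w y i assume h: "1 \<le> N \<and> w \<in> std_simplex N \<and> i < N"
    then have w: "w \<in> std_simplex N" by blast
    have "ennreal (dist (\<beta> (dirac_mix N w y)) (y i))
        = ennreal (dist (\<beta> (dirac_mix N w y)) (\<beta> (return borel (y i))))" by (simp add: b)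
    also have "\<dots> \<le> W1 (dirac_mix N w y) (return borel (y i))"
      by (rule L[OF dm_P1[OF w] ret_P1])
    also have "\<dots> \<le> (\<Sum>j<N. ennreal (w j) * ennreal (dist (y j) (y i)))"
      by (rule W1_bound[OF w])
    also have "\<dots> = ennreal (\<Sum>j<N. dist (y i) (y j) * w j)"
      using w by (subst sum_ennreal[symmetric]) (auto simp: std_simplex_def ennreal_mult' dist_commute mult.commute intro!: sum.cong)
    finally have "dist (\<beta> (dirac_mix N w y)) (y i) \<le> (\<Sum>j<N. dist (y i) (y j) * w j)"
      using w by (subst (asm) ennreal_le_iff) (auto simp: std_simplex_def intro!: sum_nonneg)
    moreover have "(\<Sum>j<N. dist (y i) (y j) * w j) \<ge> 0"
      using w by (auto simp: std_simplex_def intro!: sum_nonneg)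
    ultimately show "dist (\<beta> (dirac_mix N w y)) (y i) \<le> 1 * (\<Sum>j<N. dist (y i) (y j) ^ 1 * w j) powr (1 / real 1)"
      by simp
  qed simp_all
  then show "QAS Q D (\<lambda>N w y. \<beta> (dirac_mix N w y))"
    using assms(2) by (simp add: QAS_def)
qed

end
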